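(* For any solution $(w,F)\in X\times\mathbb R$ of the height equation, with $h=H+w$ and $\eta(q)=w(q,0)$, $$\int_{-M}^M\int_{-1}^0\frac{H_p^3w_q^2+(H_p+2h_p)w_p^2}{2h_p^2H_p^3}\,\Phi_p\Big(p;\frac1{F^2}\Big)\,dp\,dq+A\Big(\frac1{F^2}\Big)\int_{-M}^M\eta(q)\,dq\longrightarrow0\quad\text{as }M\to\infty.$$
   Context: Fix $\alpha\in(0,1)$, $\rho\in C^{2+\alpha}([-1,0])$ with $\rho>0$, $\rho_p\le0$, and $H\in C^{3+\alpha}([-1,0])$ with $H(-1)=0$, $H(0)=1$, $H_p>0$. Let $R=\mathbb R\times(-1,0)$ (coordinates $(q,p)$), $T=\mathbb R\times\{0\}$, $B=\mathbb R\times\{-1\}$. $(w,F)$ solves the height equation if $h=H+w$ satisfies $\big(-\frac{1+h_q^2}{2h_p^2}+\frac1{2H_p^2}\big)_p+\big(\frac{h_q}{h_p}\big)_q-\frac1{F^2}\rho_p(h-H)=0$ in $R$, $\frac{1+h_q^2}{2h_p^2}-\frac1{2H_p^2}+\frac1{F^2}\rho(h-1)=0$ on $T$, $h=0$ on $B$, and $0<\inf_R(H_p+w_p)<\infty$. $X$: $w\in C^{3+\alpha}(\overline R)$ of finite norm, even in $q$, with $w$ and derivatives of order $\le2$ tending to $0$ uniformly as $|q|\to\infty$, $w=0$ on $B$. For $\mu\ge0$, $\Phi(\cdot;\mu)$ solves $(\Phi_p/H_p^3)_p-\mu\rho_p\Phi=0$ on $(-1,0)$, $\Phi(-1)=0$,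 $\Phi_p(-1)=1$, and $A(\mu)=-\Phi_p(0;\mu)/H_p(0)^3+\mu\rho(0)\Phi(0;\mu)$. *)

theory Defs
  imports "HOL-Analysis.Analysis"
begin

definition holder_on :: "real \<Rightarrow> 'a::metric_space set \<Rightarrow> ('a \<Rightarrow> real) \<Rightarrow> bool" where
  "holder_on a S f \<longleftrightarrow> (\<exists>C. \<forall>x\<in>S. \<forall>y\<in>S. \<bar>f x - f y\<bar> \<le> C * dist x y powr a)"

abbreviation I01 :: "real set" where "I01 \<equiv> {-1..0}"

definition Rstrip :: "(real \<times> real) set" where
  "Rstrip = UNIV \<times> {-1<..<0}"

definition Rbar :: "(real \<times> real) set" where
  "Rbar = UNIV \<times> {-1..0}"

definition D1 :: "(real \<Rightarrow> real) \<Rightarrow> real \<Rightarrow> real" where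
  "D1 f x = vector_derivative f (at x within {-1..0})"

definition Dq :: "(real \<times> real \<Rightarrow> real) \<Rightarrow> real \<times> real \<Rightarrow> real" where
  "Dq f x = deriv (\<lambda>s. f (s, snd x)) (fst x)"

definition Dp :: "(real \<times> real \<Rightarrow> real) \<Rightarrow> real \<times> real \<Rightarrow> real" where
  "Dp f x = vector_derivative (\<lambda>s. f (fst x, s)) (at (snd x) within {-1..0})"

definition Cka_interval :: "nat \<Rightarrow> real \<Rightarrow> (real \<Rightarrow> real) \<Rightarrow> bool" where
  "Cka_interval k a f \<longleftrightarrow> (\<exists>d :: nat \<Rightarrow> real \<Rightarrow> real.
      (\<forall>x\<in>{-1..0}. d 0 x = f x) \<and>
      (\<forall>j<k. \<forall>x\<in>{-1..0}. (d j has_vector_derivative d (Suc j) x) (at x within {-1..0})) \<and>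
      holder_on a {-1..0} (d k))"

definition inX :: "real \<Rightarrow> (real \<times> real \<Rightarrow> real) \<Rightarrow> bool" where
  "inX a w \<longleftrightarrow> (\<exists>d :: nat \<Rightarrow> nat \<Rightarrow> real \<times> real \<Rightarrow> real.
      (\<forall>x\<in>Rbar. d 0 0 x = w x) \<and>
      (\<forall>i j. i + j < 3 \<longrightarrow> (\<forall>q p. p \<in> {-1..0} \<longrightarrow>
          ((\<lambda>s. d i j (s, p)) has_real_derivative d (Suc i) j (q, p)) (at q) \<and>
          ((\<lambda>s. d i j (q, s)) has_vector_derivative d i (Suc j) (q, p)) (at p within {-1..0}))) \<and>
      (\<forall>i j. i + j \<le> 3 \<longrightarrow> continuous_on Rbar (d i j) \<and> bounded (d i j ` Rbar)) \<and>
      (\<forall>i j. i + j = 3 \<longrightarrow> holder_on a Rbar (d i j)) \<and>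
      (\<forall>i j. i + j \<le> 2 \<longrightarrow> (\<forall>e>0. \<exists>K. \<forall>q p. p \<in> {-1..0} \<longrightarrow> K \<le> \<bar>q\<bar> \<longrightarrow> \<bar>d i j (q, p)\<bar> < e))) \<and>
    (\<forall>q p. p \<in> {-1..0} \<longrightarrow> w (-q, p) = w (q, p)) \<and>
    (\<forall>q. w (q, -1) = 0)"

text \<open>(w,F) solves the height equation, with h = H + w.  The factor 1/F^2 presupposes F \<noteq> 0.\<close>
definition height_eq ::
  "(real \<Rightarrow> real) \<Rightarrow> (real \<Rightarrow> real) \<Rightarrow> (real \<times> real \<Rightarrow> real) \<Rightarrow> real \<Rightarrow> bool" where
  "height_eq \<rho> H w F \<longleftrightarrow>
    (let h = (\<lambda>x. H (snd x) + w x); hq = Dq h; hp = Dp h in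
      F \<noteq> 0 \<and>
      (\<forall>x\<in>Rstrip.
         Dp (\<lambda>y. - (1 + (hq y)\<^sup>2) / (2 * (hp y)\<^sup>2) + 1 / (2 * (D1 H (snd y))\<^sup>2)) x
         + Dq (\<lambda>y. hq y / hp y) x
         - 1 / F\<^sup>2 * D1 \<rho> (snd x) * (h x - H (snd x)) = 0) \<and>
      (\<forall>q. (1 + (hq (q, 0))\<^sup>2) / (2 * (hp (q, 0))\<^sup>2) - 1 / (2 * (D1 H 0)\<^sup>2)
            + 1 / F\<^sup>2 * \<rho> 0 * (h (q, 0) - 1) = 0) \<and>
      (\<forall>q. h (q, -1) = 0) \<and>
      (\<exists>c>0. \<forall>x\<in>Rstrip. c \<le> hp x))"

definition Phi_sol :: "(real \<Rightarrow> real) \<Rightarrow> (real \<Rightarrow> real) \<Rightarrow> real \<Rightarrow> (real \<Rightarrow> real) \<Rightarrow> bool" where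
  "Phi_sol \<rho> H \<mu> \<phi> \<longleftrightarrow>
     (\<forall>p\<in>{-1..0}. \<phi> differentiable (at p within {-1..0})) \<and>
     (\<forall>p\<in>{-1<..<0}. ((\<lambda>s. D1 \<phi> s / (D1 H s) ^ 3) has_real_derivative \<mu> * D1 \<rho> p * \<phi> p) (at p)) \<and>
     \<phi> (-1) = 0 \<and> D1 \<phi> (-1) = 1"

definition Afun :: "(real \<Rightarrow> real) \<Rightarrow> (real \<Rightarrow> real) \<Rightarrow> (real \<Rightarrow> real \<Rightarrow> real) \<Rightarrow> real \<Rightarrow> real" where
  "Afun \<rho> H \<Phi> \<mu> = - D1 (\<Phi> \<mu>) 0 / (D1 H 0) ^ 3 + \<mu> * \<rho> 0 * \<Phi> \<mu> 0"

end

theory Submission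
  imports Defs
begin

lemma Ieq: "{-1..0::real} = cbox (-1) 0" by simp

lemma vd_cont:
  assumes "\<forall>x\<in>{-1..0::real}. \<exists>D. (f has_vector_derivative D) (at x within {-1..0})"
  shows "continuous_on {-1..0} (f::real\<Rightarrow>real)"
  using assms has_vector_derivative_continuous continuous_on_eq_continuous_within by blast

lemma Cka_D1:
  assumes "Cka_interval (Suc k) a f"
  shows "\<forall>x\<in>{-1..0}. (f has_vector_derivative D1 f x) (at x within {-1..0})"
    and "continuous_on {-1..0} f"
    and "1 \<le> k \<Longrightarrow> \<forall>x\<in>{-1..0}. \<exists>D. (D1 f has_vector_derivative D) (at x within {-1..0})"
    and "1 \<le> k \<Longrightarrow> continuous_on {-1..0} (D1 f)"
proof -
  obtain d where d0: "\<forall>x\<in>{-1..0}. d 0 x = f x"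
    and dd: "\<forall>j<Suc k. \<forall>x\<in>{-1..0}. (d j has_vector_derivative d (Suc j) x) (at x within {-1..0})"
    using assms unfolding Cka_interval_def by blast
  have f1: "(f has_vector_derivative d 1 x) (at x within {-1..0})" if "x \<in> {-1..0}" for x
    using has_vector_derivative_transform[of x "{-1..0}" f "d 0"] dd d0 that by simp
  have D1e: "D1 f x = d 1 x" if "x \<in> {-1..0}" for x
    unfolding D1_def using vector_derivative_within_cbox[of "-1" 0 x f] f1[OF that] that by simp
  show 1: "\<forall>x\<in>{-1..0}. (f has_vector_derivative D1 f x) (at x within {-1..0})"
    using f1 D1e by simp
  show "continuous_on {-1..0} f" using 1 vd_cont by blast
  assume k: "1 \<le> k"
  have "(D1 f has_vector_derivative d 2 x) (at x within {-1..0})" if "x \<in> {-1..0}" for x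
    using has_vector_derivative_transform[of x "{-1..0}" "D1 f" "d 1"] dd D1e that k
    by (simp add: numeral_2_eq_2)
  then show 2: "\<forall>x\<in>{-1..0}. \<exists>D. (D1 f has_vector_derivative D) (at x within {-1..0})" by blast
  then show "continuous_on {-1..0} (D1 f)" using vd_cont by blast
qed

lemma Phi_reg:
  assumes H: "Cka_interval 3 a H" and Hpos: "\<forall>p\<in>{-1..0}. D1 H p > 0"
    and rho: "Cka_interval 2 b \<rho>" and P: "Phi_sol \<rho> H \<mu> \<phi>"
  shows "continuous_on {-1..0} \<phi>"
    and "\<forall>p\<in>{-1<..<0}. (\<phi> has_real_derivative D1 \<phi> p) (at p)"
    and "continuous_on {-1..0} (\<lambda>s. D1 \<phi> s / D1 H s ^ 3)"
proof -
  have H3: "Cka_interval (Suc 2) a H" using H by (simp add: numeral_3_eq_3)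
  have r2: "Cka_interval (Suc 1) b \<rho>" using rho by (simp add: numeral_2_eq_2)
  have Hc: "continuous_on {-1..0} (D1 H)" using Cka_D1(4)[OF H3] by simp
  have rc: "continuous_on {-1..0} (D1 \<rho>)" using Cka_D1(4)[OF r2] by simp
  have pv: "(\<phi> has_vector_derivative D1 \<phi> x) (at x within {-1..0})" if "x \<in> {-1..0}" for x
    using P that unfolding Phi_sol_def D1_def by (simp add: vector_derivative_works[symmetric])
  show pc: "continuous_on {-1..0} \<phi>" using pv vd_cont by blast
  have atI: "(f has_vector_derivative D) (at x)" 
    if "(f has_vector_derivative D) (at x within {-1..0})" "x \<in> {-1<..<0}" for f D x
  proof -
    have "(f has_vector_derivative D) (at x within {-1<..<0})"
      by (rule has_vector_derivative_within_subset[OF that(1)]) auto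
    then show ?thesis using at_within_open[OF that(2)] by simp
  qed
  show pd: "\<forall>p\<in>{-1<..<0}. (\<phi> has_real_derivative D1 \<phi> p) (at p)"
    using pv atI unfolding has_real_derivative_iff_has_vector_derivative
    by (meson greaterThanLessThan_iff atLeastAtMost_iff less_imp_le)
  define G' where "G' s = \<mu> * D1 \<rho> s * \<phi> s" for s
  have G'c: "continuous_on {-1..0} G'" unfolding G'_def
    by (intro continuous_intros rc pc)
  define gh where "gh t = integral {-1..t} G'" for t
  have ghd: "(gh has_vector_derivative G' x) (at x within {-1..0})" if "x \<in> {-1..0}" for x
    unfolding gh_def using integral_has_vector_derivative[OF G'c that] .
  have ghc: "continuous_on {-1..0} gh" using ghd vd_cont by blast
  define g where "g s = D1 \<phi> s / D1 H s ^ 3" for s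
  have gd: "(g has_real_derivative G' p) (at p)" if "p \<in> {-1<..<0}" for p
    using P that unfolding Phi_sol_def g_def G'_def by auto
  have "\<exists>c. \<forall>x\<in>{-1<..<0}. g x - gh x = (c::real)"
  proof (rule has_field_derivative_zero_constant)
    fix x :: real assume x: "x \<in> {-1<..<0}"
    have "(gh has_real_derivative G' x) (at x)"
      using atI[OF ghd x] x by (simp add: has_real_derivative_iff_has_vector_derivative)
    then have "((\<lambda>x. g x - gh x) has_real_derivative G' x - G' x) (at x)"
      using gd[OF x] by (intro derivative_intros) auto
    then show "((\<lambda>x. g x - gh x) has_real_derivative 0) (at x within {-1<..<0})"
      by (simp add: has_field_derivative_at_within)
  qed simp
  then obtain c where c0: "\<forall>x\<in>{-1<..<0}. g x - gh x = c" by blast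
  have c: "g x = gh x + c" if "x \<in> {-1<..<0}" for x using c0 that by force
  define k where "k s = (gh s + c) * D1 H s ^ 3" for s
  have kc: "continuous_on {-1..0} k" unfolding k_def by (intro continuous_intros ghc Hc)
  define Psi where "Psi t = \<phi> (-1) + integral {-1..t} k" for t
  have Psid: "(Psi has_vector_derivative k x) (at x within {-1..0})" if "x \<in> {-1..0}" for x
    unfolding Psi_def using integral_has_vector_derivative[OF kc that]
    by (auto intro!: derivative_eq_intros)
  have Psic: "continuous_on {-1..0} Psi" using Psid vd_cont by blast
  have eq: "Psi x - \<phi> x = 0" if x: "x \<in> {-1..0}" for x
  proof (rule has_derivative_zero_unique_strong_interval[of "{-1,0}" "-1" 0 "\<lambda>x. Psi x - \<phi> x"])
    show "continuous_on {-1..0} (\<lambda>x. Psi x - \<phi> x)" by (intro continuous_intros Psic pc)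
    show "Psi (-1) - \<phi> (-1) = 0" unfolding Psi_def by simp
    fix y assume y: "y \<in> {-1..0::real} - {-1, 0}"
    then have y': "y \<in> {-1<..<0}" by auto
    have hy: "D1 H y > 0" using Hpos y by auto
    have "D1 \<phi> y = g y * D1 H y ^ 3" using hy unfolding g_def by simp
    then have "k y = D1 \<phi> y" unfolding k_def using c[OF y'] by simp
    then have "((\<lambda>x. Psi x - \<phi> x) has_vector_derivative D1 \<phi> y - D1 \<phi> y) (at y within {-1..0})"
      using Psid[of y] pv[of y] y by (auto intro!: derivative_eq_intros)
    then show "((\<lambda>x. Psi x - \<phi> x) has_derivative (\<lambda>h. 0)) (at y within {-1..0})"
      by (simp add: has_vector_derivative_def)
  qed (use x in auto)
  have gE: "g x = gh x + c" if x: "x \<in> {-1..0}" for x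
  proof -
    have "(\<phi> has_vector_derivative k x) (at x within {-1..0})"
      using has_vector_derivative_transform[OF x _ Psid[OF x], of \<phi>] eq by force
    then have "D1 \<phi> x = k x" unfolding D1_def
      using vector_derivative_within_cbox[of "-1" 0 x] x by simp
    moreover have "D1 H x > 0" using Hpos x by auto
    then have "D1 H x ^ 3 \<noteq> 0" by simp
    ultimately show ?thesis unfolding g_def k_def by simp
  qed
  show "continuous_on {-1..0} (\<lambda>s. D1 \<phi> s / D1 H s ^ 3)"
  proof -
    have "continuous_on {-1..0} (\<lambda>x. gh x + c)" by (intro continuous_intros ghc)
    then have "continuous_on {-1..0} g" by (rule continuous_on_eq) (use gE in auto)
    then show ?thesis unfolding g_def .
  qed
qed


lemma slice_p: "continuous_on Rbar f \<Longrightarrow> continuous_on {-1..0} (\<lambda>s. f (q, s))"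
  by (rule continuous_on_compose2[of Rbar f]) (auto simp: Rbar_def intro!: continuous_intros)

lemma slice_q: "continuous_on Rbar f \<Longrightarrow> p \<in> {-1..0} \<Longrightarrow> continuous_on UNIV (\<lambda>s. f (s, p))"
  by (rule continuous_on_compose2[of Rbar f]) (auto simp: Rbar_def intro!: continuous_intros)

lemma atI: "(f has_vector_derivative D) (at x within {-1..0}) \<Longrightarrow> x \<in> {-1<..<0} \<Longrightarrow> (f has_vector_derivative D) (at x)"
proof -
  assume a: "(f has_vector_derivative D) (at x within {-1..0})" and x: "x \<in> {-1<..<0}"
  have "(f has_vector_derivative D) (at x within {-1<..<0})"
    by (rule has_vector_derivative_within_subset[OF a]) auto
  then show ?thesis using at_within_open[OF x] by simp
qed


lemma alg_id:
  fixes X Y U P :: real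
  assumes "X > 0" "X + Y > 0"
  shows "(X ^ 3 * U\<^sup>2 + (X + 2 * (X + Y)) * Y\<^sup>2) / (2 * (X + Y)\<^sup>2 * X ^ 3) * P
     = - ((- (1 + U\<^sup>2) / (2 * (X + Y)\<^sup>2) + 1 / (2 * X\<^sup>2)) * P) + Y * (P / X ^ 3)"
proof -
  have "X \<noteq> 0" "X + Y \<noteq> 0" using assms by auto
  then show ?thesis by (simp add: field_simps) algebra
qed

theorem lemma4p3:
  fixes \<alpha> :: real and \<rho> H :: "real \<Rightarrow> real" and \<Phi> :: "real \<Rightarrow> real \<Rightarrow> real"
    and w :: "real \<times> real \<Rightarrow> real" and F :: real
  assumes "0 < \<alpha>" "\<alpha> < 1"
    and "Cka_interval 2 \<alpha> \<rho>" "\<forall>p\<in>{-1..0}. \<rho> p > 0" "\<forall>p\<in>{-1..0}. D1 \<rho> p \<le> 0"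
    and "Cka_interval 3 \<alpha> H" "H (-1) = 0" "H 0 = 1" "\<forall>p\<in>{-1..0}. D1 H p > 0"
    and "\<forall>\<mu>\<ge>0. Phi_sol \<rho> H \<mu> (\<Phi> \<mu>)"
    and "inX \<alpha> w"
    and "height_eq \<rho> H w F"
  shows "((\<lambda>M. integral {-M..M} (\<lambda>q. integral {-1..0} (\<lambda>p.
              ((D1 H p) ^ 3 * (Dq w (q, p))\<^sup>2
                 + (D1 H p + 2 * Dp (\<lambda>x. H (snd x) + w x) (q, p)) * (Dp w (q, p))\<^sup>2)
              / (2 * (Dp (\<lambda>x. H (snd x) + w x) (q, p))\<^sup>2 * (D1 H p) ^ 3)
              * D1 (\<Phi> (1 / F\<^sup>2)) p))
          + Afun \<rho> H \<Phi> (1 / F\<^sup>2) * integral {-M..M} (\<lambda>q. w (q, 0)))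
         \<longlongrightarrow> 0) at_top"
proof -
  define mu where "mu = 1 / F\<^sup>2"
  define \<phi> where "\<phi> = \<Phi> mu"
  define h where "h = (\<lambda>x. H (snd x) + w x)"
  define a where "a = (\<lambda>y. - (1 + (Dq h y)\<^sup>2) / (2 * (Dp h y)\<^sup>2) + 1 / (2 * (D1 H (snd y))\<^sup>2))"
  define b where "b = (\<lambda>y. Dq h y / Dp h y)"
  have mu0: "mu \<ge> 0" unfolding mu_def by simp
  have Psol: "Phi_sol \<rho> H mu \<phi>" using assms(10) mu0 unfolding \<phi>_def by blast
  have H3: "Cka_interval (Suc 2) \<alpha> H" using assms(6) by (simp add: numeral_3_eq_3)
  have Hd: "\<forall>x\<in>{-1..0}. (H has_vector_derivative D1 H x) (at x within {-1..0})"
    using Cka_D1(1)[OF H3] .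
  have Hd2: "\<forall>x\<in>{-1..0}. \<exists>D. (D1 H has_vector_derivative D) (at x within {-1..0})"
    using Cka_D1(3)[OF H3] by simp
  have Hc: "continuous_on {-1..0} (D1 H)" using Cka_D1(4)[OF H3] by simp
  have Hpos: "\<forall>p\<in>{-1..0}. D1 H p > 0" using assms(9) .
  have Hp: "D1 H p > 0" if "p \<in> {-1..0}" for p using Hpos that by blast
  note PR = Phi_reg[OF assms(6) Hpos assms(3) Psol]
  have pc: "continuous_on {-1..0} \<phi>" using PR(1) .
  have pd: "\<forall>p\<in>{-1<..<0}. (\<phi> has_real_derivative D1 \<phi> p) (at p)" using PR(2) .
  define g where "g s = D1 \<phi> s / D1 H s ^ 3" for s
  have gc: "continuous_on {-1..0} g" using PR(3) unfolding g_def .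
  have gd: "\<forall>p\<in>{-1<..<0}. (g has_real_derivative mu * D1 \<rho> p * \<phi> p) (at p)"
    using Psol unfolding Phi_sol_def g_def by blast
  have phim1: "\<phi> (-1) = 0" using Psol unfolding Phi_sol_def by blast
  have HE: "F \<noteq> 0"
    "\<forall>x\<in>Rstrip. Dp a x + Dq b x - mu * D1 \<rho> (snd x) * (h x - H (snd x)) = 0"
    "\<forall>q. (1 + (Dq h (q, 0))\<^sup>2) / (2 * (Dp h (q, 0))\<^sup>2) - 1 / (2 * (D1 H 0)\<^sup>2)
            + mu * \<rho> 0 * (h (q, 0) - 1) = 0"
    "\<exists>c>0. \<forall>x\<in>Rstrip. c \<le> Dp h x"
    using assms(12) unfolding height_eq_def Let_def a_def b_def h_def mu_def by auto
  obtain c where c0: "c > 0" and cR: "\<forall>x\<in>Rstrip. c \<le> Dp h x" using HE(4) by blast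
  obtain d :: "nat \<Rightarrow> nat \<Rightarrow> real \<times> real \<Rightarrow> real" where
    d0: "\<forall>x\<in>Rbar. d 0 0 x = w x" and
    dd: "\<forall>i j. i + j < 3 \<longrightarrow> (\<forall>q p. p \<in> {-1..0} \<longrightarrow>
          ((\<lambda>s. d i j (s, p)) has_real_derivative d (Suc i) j (q, p)) (at q) \<and>
          ((\<lambda>s. d i j (q, s)) has_vector_derivative d i (Suc j) (q, p)) (at p within {-1..0}))" and
    dc: "\<forall>i j. i + j \<le> 3 \<longrightarrow> continuous_on Rbar (d i j) \<and> bounded (d i j ` Rbar)" and
    ddec: "\<forall>i j. i + j \<le> 2 \<longrightarrow> (\<forall>e>0. \<exists>K. \<forall>q p. p \<in> {-1..0} \<longrightarrow> K \<le> \<bar>q\<bar> \<longrightarrow> \<bar>d i j (q, p)\<bar> < e)" and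
    wB: "\<forall>q. w (q, -1) = 0"
    using assms(11) unfolding inX_def by blast
  have wE: "w (q, p) = d 0 0 (q, p)" if "p \<in> {-1..0}" for q p
    using d0 that unfolding Rbar_def by auto
  have dq: "((\<lambda>s. d i j (s, p)) has_real_derivative d (Suc i) j (q, p)) (at q)"
    if "i + j < 3" "p \<in> {-1..0}" for i j q p using dd that by blast
  have dp: "((\<lambda>s. d i j (q, s)) has_real_derivative d i (Suc j) (q, p)) (at p within {-1..0})"
    if "i + j < 3" "p \<in> {-1..0}" for i j q p using dd that
    unfolding has_real_derivative_iff_has_vector_derivative by blast
  have dcont: "continuous_on Rbar (d i j)" if "i + j \<le> 3" for i j using dc that by blast
  have Dqh: "Dq h (q, p) = d 1 0 (q, p)" and Dqw: "Dq w (q, p) = d 1 0 (q, p)"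
    if "p \<in> {-1..0}" for q p
  proof -
    have e1: "(\<lambda>s. h (s, p)) = (\<lambda>s. H p + d 0 0 (s, p))" using wE that unfolding h_def by auto
    have e2: "(\<lambda>s. w (s, p)) = (\<lambda>s. d 0 0 (s, p))" using wE that by auto
    have "((\<lambda>s. H p + d 0 0 (s, p)) has_real_derivative 0 + d 1 0 (q, p)) (at q)"
      using dq[of 0 0 p q] that by (intro derivative_intros) auto
    then show "Dq h (q, p) = d 1 0 (q, p)" unfolding Dq_def using e1 DERIV_imp_deriv by simp
    show "Dq w (q, p) = d 1 0 (q, p)" unfolding Dq_def using e2 DERIV_imp_deriv dq[of 0 0 p q] that by simp
  qed
  have Dph: "Dp h (q, p) = D1 H p + d 0 1 (q, p)" and Dpw: "Dp w (q, p) = d 0 1 (q, p)"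
    if p: "p \<in> {-1..0}" for q p
  proof -
    have w0: "((\<lambda>s. d 0 0 (q, s)) has_vector_derivative d 0 1 (q, p)) (at p within {-1..0})"
      using dp[of 0 0 p q] p by (simp add: has_real_derivative_iff_has_vector_derivative)
    have w1: "((\<lambda>s. w (q, s)) has_vector_derivative d 0 1 (q, p)) (at p within {-1..0})"
      by (rule has_vector_derivative_transform[OF p _ w0]) (use wE in auto)
    then show "Dp w (q, p) = d 0 1 (q, p)" unfolding Dp_def
      using vector_derivative_within_cbox[of "-1" 0 p] p by simp
    have "((\<lambda>s. h (q, s)) has_vector_derivative D1 H p + d 0 1 (q, p)) (at p within {-1..0})"
      unfolding h_def using Hd w1 p by (auto intro!: derivative_eq_intros)
    then show "Dp h (q, p) = D1 H p + d 0 1 (q, p)" unfolding Dp_def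
      using vector_derivative_within_cbox[of "-1" 0 p] p by simp
  qed
  have hpc: "c \<le> D1 H p + d 0 1 (q, p)" if p: "p \<in> {-1..0}" for q p
  proof -
    have cc: "continuous_on (closure {-1<..<0}) (\<lambda>s. D1 H s + d 0 1 (q, s))"
      using Hc slice_p[OF dcont[of 0 1]] by (auto intro!: continuous_intros)
    show ?thesis
    proof (rule continuous_ge_on_closure[OF cc])
      show "p \<in> closure {-1<..<0::real}" using p by simp
      fix s :: real assume s: "s \<in> {-1<..<0}"
      then have "(q, s) \<in> Rstrip" unfolding Rstrip_def by auto
      then show "c \<le> D1 H s + d 0 1 (q, s)" using cR Dph[of s q] s by auto
    qed
  qed
  have hpos: "D1 H p + d 0 1 (q, p) > 0" if "p \<in> {-1..0}" for q p
    using hpc[OF that, of q] c0 by linarith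
  define bb where "bb q p = d 1 0 (q, p) / (D1 H p + d 0 1 (q, p))" for q p
  define bq where "bq q p = (d 2 0 (q, p) * (D1 H p + d 0 1 (q, p)) - d 1 0 (q, p) * d 1 1 (q, p))
       / (D1 H p + d 0 1 (q, p))\<^sup>2" for q p
  have bbd: "((\<lambda>s. bb s p) has_real_derivative bq q p) (at q)" if p: "p \<in> {-1..0}" for q p
  proof -
    have "((\<lambda>s. bb s p) has_real_derivative
      (d 2 0 (q, p) * (D1 H p + d 0 1 (q, p)) - d 1 0 (q, p) * (0 + d 1 1 (q, p))) /
        ((D1 H p + d 0 1 (q, p)) * (D1 H p + d 0 1 (q, p)))) (at q)"
      unfolding bb_def using dq[of 1 0 p q] dq[of 0 1 p q] p hpos[OF p, of q]
      by (intro derivative_intros) (auto simp: numeral_2_eq_2)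
    then show ?thesis unfolding bq_def by (simp add: power2_eq_square)
  qed
  have Dqb: "Dq b (q, p) = bq q p" if p: "p \<in> {-1..0}" for q p
  proof -
    have "(\<lambda>s. b (s, p)) = (\<lambda>s. bb s p)" unfolding b_def bb_def
      using Dqh[OF p] Dph[OF p] by auto
    then show ?thesis unfolding Dq_def using DERIV_imp_deriv[OF bbd[OF p]] by simp
  qed
  define aT where "aT q s = - (1 + (d 1 0 (q, s))\<^sup>2) / (2 * (D1 H s + d 0 1 (q, s))\<^sup>2) + 1 / (2 * (D1 H s)\<^sup>2)" for q s
  have aE: "a (q, s) = aT q s" if "s \<in> {-1..0}" for q s
    unfolding a_def aT_def using Dqh[OF that] Dph[OF that] by simp
  have atc: "continuous_on {-1..0} (aT q)" for q
  proof -
    have "continuous_on {-1..0} (\<lambda>s. - (1 + (d 1 0 (q, s))\<^sup>2) / (2 * (D1 H s + d 0 1 (q, s))\<^sup>2) + 1 / (2 * (D1 H s)\<^sup>2))"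
      using Hc slice_p[OF dcont[of 1 0]] slice_p[OF dcont[of 0 1]] hpos Hp
      by (intro continuous_intros) (auto simp: less_imp_neq[symmetric] dest!: Hp)
    then show ?thesis unfolding aT_def .
  qed
  have Dpa: "((\<lambda>s. a (q, s)) has_real_derivative Dp a (q, p)) (at p)" if p: "p \<in> {-1<..<0}" for q p
  proof -
    have pI: "p \<in> {-1..0}" using p by auto
    obtain DH where DH: "(D1 H has_real_derivative DH) (at p within {-1..0})"
      using Hd2 pI unfolding has_real_derivative_iff_has_vector_derivative by blast
    have dU: "(\<lambda>s. d 1 0 (q, s)) differentiable (at p within {-1..0})"
      using dp[of 1 0 p q] pI real_differentiable_def by auto
    have dV: "(\<lambda>s. d 0 1 (q, s)) differentiable (at p within {-1..0})"
      using dp[of 0 1 p q] pI real_differentiable_def by auto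
    have dH: "(\<lambda>s. D1 H s) differentiable (at p within {-1..0})"
      using DH real_differentiable_def by auto
    have n1: "2 * (D1 H p + d 0 1 (q, p))\<^sup>2 \<noteq> 0" using hpos[OF pI, of q] by simp
    have n2: "2 * (D1 H p)\<^sup>2 \<noteq> 0" using Hp[OF pI] by simp
    have "(\<lambda>s. aT q s) differentiable (at p within {-1..0})"
      unfolding aT_def
      by (intro differentiable_add differentiable_divide differentiable_minus differentiable_power
          differentiable_mult differentiable_const dU dV dH n1 n2)
    then have "\<exists>D. ((\<lambda>s. aT q s) has_real_derivative D) (at p within {-1..0})"
      using real_differentiable_def by blast
    then obtain D where D: "(aT q has_vector_derivative D) (at p within {-1..0})"
      unfolding has_real_derivative_iff_has_vector_derivative by blast
    have D': "((\<lambda>s. a (q, s)) has_vector_derivative D) (at p within {-1..0})"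
      by (rule has_vector_derivative_transform[OF pI _ D]) (use aE in auto)
    have "Dp a (q, p) = D" unfolding Dp_def
      using vector_derivative_within_cbox[of "-1" 0 p] D' pI by simp
    then show ?thesis using atI[OF D' p] by (simp add: has_real_derivative_iff_has_vector_derivative)
  qed
  have Dpw': "((\<lambda>s. w (q, s)) has_real_derivative d 0 1 (q, p)) (at p)" if p: "p \<in> {-1<..<0}" for q p
  proof -
    have pI: "p \<in> {-1..0}" using p by auto
    have w0: "((\<lambda>s. d 0 0 (q, s)) has_vector_derivative d 0 1 (q, p)) (at p within {-1..0})"
      using dp[of 0 0 p q] pI by (simp add: has_real_derivative_iff_has_vector_derivative)
    have w1: "((\<lambda>s. w (q, s)) has_vector_derivative d 0 1 (q, p)) (at p within {-1..0})"
      by (rule has_vector_derivative_transform[OF pI _ w0]) (use wE in auto)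
    show ?thesis using atI[OF w1 p] by (simp add: has_real_derivative_iff_has_vector_derivative)
  qed
  define J where "J q p = \<phi> p * bq q p" for q p
  define K where "K q s = a (q, s) * \<phi> s - w (q, s) * g s" for q s
  define K' where "K' q s = Dp a (q, s) * \<phi> s + a (q, s) * D1 \<phi> s
      - (d 0 1 (q, s) * g s + w (q, s) * (mu * D1 \<rho> s * \<phi> s))" for q s
  define Intg where "Intg q p = ((D1 H p) ^ 3 * (Dq w (q, p))\<^sup>2
                 + (D1 H p + 2 * Dp h (q, p)) * (Dp w (q, p))\<^sup>2)
              / (2 * (Dp h (q, p))\<^sup>2 * (D1 H p) ^ 3) * D1 \<phi> p" for q p
  define AA where "AA = Afun \<rho> H \<Phi> mu"
  have AAe: "AA = - D1 \<phi> 0 / (D1 H 0) ^ 3 + mu * \<rho> 0 * \<phi> 0"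
    unfolding AA_def Afun_def \<phi>_def ..
  have Kc: "continuous_on {-1..0} (K q)" for q
  proof -
    have "continuous_on {-1..0} (\<lambda>s. aT q s * \<phi> s - d 0 0 (q, s) * g s)"
      by (intro continuous_intros atc pc gc slice_p[OF dcont[of 0 0]]) auto
    then show ?thesis by (rule continuous_on_eq) (auto simp: K_def aE wE)
  qed
  have Kd: "(K q has_vector_derivative K' q s) (at s)" if s: "s \<in> {-1<..<0}" for q s
  proof -
    have "((\<lambda>s. a (q, s) * \<phi> s - w (q, s) * g s) has_real_derivative K' q s) (at s)"
      unfolding K'_def
      using Dpa[OF s] pd s Dpw'[OF s] gd by (auto intro!: derivative_eq_intros)
    then show ?thesis unfolding K_def has_real_derivative_iff_has_vector_derivative .
  qed
  have FTC: "(K' q has_integral K q 0 - K q (-1)) {-1..0}" for q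
    by (rule fundamental_theorem_of_calculus_interior) (use Kc Kd in auto)
  have Jc: "continuous_on {-1..0} (J q)" for q
  proof -
    have "continuous_on {-1..0} (\<lambda>p. \<phi> p * ((d 2 0 (q, p) * (D1 H p + d 0 1 (q, p)) - d 1 0 (q, p) * d 1 1 (q, p))
       / (D1 H p + d 0 1 (q, p))\<^sup>2))"
      using hpos by (intro continuous_intros pc Hc slice_p dcont) (auto simp: less_imp_neq[symmetric])
    then show ?thesis unfolding J_def bq_def .
  qed
  have Jint: "(J q has_integral integral {-1..0} (J q)) {-1..0}" for q
    using integrable_continuous_real[OF Jc] by (simp add: has_integral_integral)
  have Km1: "K q (-1) = 0" for q unfolding K_def using phim1 wB by simp
  have K0: "K q 0 = AA * w (q, 0)" for q
  proof -
    have "h (q, 0) = 1 + w (q, 0)" unfolding h_def using assms(8) by simp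
    then have "a (q, 0) = mu * \<rho> 0 * w (q, 0)" using HE(3)[rule_format, of q] unfolding a_def
      by (simp add: algebra_simps diff_divide_distrib add_divide_distrib)
    then show ?thesis unfolding K_def AAe g_def by (simp add: algebra_simps)
  qed
  have Ieq: "Intg q p = - K' q p - J q p" if p: "p \<in> {-1<..<0}" for q p
  proof -
    have pI: "p \<in> {-1..0}" using p by auto
    have "(q, p) \<in> Rstrip" using p unfolding Rstrip_def by auto
    then have "Dp a (q, p) + Dq b (q, p) - mu * D1 \<rho> p * (h (q, p) - H p) = 0"
      using HE(2) by auto
    then have Dpa_e: "Dp a (q, p) = mu * D1 \<rho> p * w (q, p) - bq q p"
      using Dqb[OF pI] unfolding h_def by simp
    have "- K' q p - J q p = - (aT q p * D1 \<phi> p) + d 0 1 (q, p) * (D1 \<phi> p / D1 H p ^ 3)"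
      unfolding K'_def J_def g_def Dpa_e aE[OF pI] by (simp add: algebra_simps)
    also have "\<dots> = Intg q p"
      unfolding Intg_def aT_def Dqw[OF pI] Dph[OF pI] Dpw[OF pI]
      using alg_id[OF Hp[OF pI] hpos[OF pI]] by simp
    finally show ?thesis by simp
  qed
  have perq: "(Intg q has_integral (- (AA * w (q, 0)) - integral {-1..0} (J q))) {-1..0}" for q
  proof -
    have "((\<lambda>p. - K' q p - J q p) has_integral (- (K q 0 - K q (-1)) - integral {-1..0} (J q))) {-1..0}"
      by (intro has_integral_diff has_integral_neg FTC Jint)
    then have "((\<lambda>p. - K' q p - J q p) has_integral (- (AA * w (q, 0)) - integral {-1..0} (J q))) {-1..0}"
      using K0 Km1 by simp
    then show ?thesis
      using has_integral_spike_finite[of "{-1, 0}" "{-1..0}" "Intg q" "\<lambda>p. - K' q p - J q p"] Ieq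
      by auto
  qed
  define G where "G q = integral {-1..0} (\<lambda>p. \<phi> p * bb q p)" for q
  define G' where "G' q = integral {-1..0} (J q)" for q
  have Jcont: "continuous_on (UNIV \<times> cbox (-1) 0) (\<lambda>(x, t). J x t)"
  proof -
    have e: "(\<lambda>(x, t). J x t) = (\<lambda>z. \<phi> (snd z) * ((d 2 0 z * (D1 H (snd z) + d 0 1 z) - d 1 0 z * d 1 1 z)
       / (D1 H (snd z) + d 0 1 z)\<^sup>2))"
      by (auto simp: J_def bq_def fun_eq_iff)
    have c1: "continuous_on Rbar (\<lambda>z. \<phi> (snd z))"
      by (rule continuous_on_compose2[OF pc continuous_on_snd]) (auto simp: Rbar_def)
    have c2: "continuous_on Rbar (\<lambda>z. D1 H (snd z))"
      by (rule continuous_on_compose2[OF Hc continuous_on_snd]) (auto simp: Rbar_def)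
    have nz: "(D1 H (snd z) + d 0 1 z)\<^sup>2 \<noteq> 0" if "z \<in> Rbar" for z
      using hpos[of "snd z" "fst z"] that unfolding Rbar_def by (cases z) auto
    have "continuous_on Rbar (\<lambda>z. \<phi> (snd z) * ((d 2 0 z * (D1 H (snd z) + d 0 1 z) - d 1 0 z * d 1 1 z)
       / (D1 H (snd z) + d 0 1 z)\<^sup>2))"
      using nz by (intro continuous_intros c1 c2 dcont) auto
    moreover have "UNIV \<times> cbox (-1) 0 = Rbar" unfolding Rbar_def by simp
    ultimately show ?thesis using e by simp
  qed
  have Gd: "(G has_real_derivative G' q) (at q)" for q
  proof -
    have "((\<lambda>x. integral (cbox (-1) 0) (\<lambda>t. \<phi> t * bb x t)) has_field_derivative integral (cbox (-1) 0) (J q))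
       (at q within UNIV)"
    proof (rule leibniz_rule_field_derivative[OF _ _ Jcont])
      fix x t :: real assume "t \<in> cbox (-1) 0"
      then have t: "t \<in> {-1..0}" by simp
      show "((\<lambda>x. \<phi> t * bb x t) has_field_derivative J x t) (at x within UNIV)"
        unfolding J_def using DERIV_cmult[OF bbd[OF t, of x], of "\<phi> t"] by simp
    next
      fix x :: real
      have "continuous_on {-1..0} (\<lambda>t. \<phi> t * bb x t)"
        unfolding bb_def using hpos
        by (intro continuous_intros pc Hc slice_p dcont) (auto simp: less_imp_neq[symmetric])
      then show "(\<lambda>t. \<phi> t * bb x t) integrable_on cbox (-1) 0"
        using integrable_continuous_real by simp
    qed auto
    then show ?thesis unfolding G_def G'_def by simp
  qed
  have etac: "continuous_on UNIV (\<lambda>q. w (q, 0))"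
  proof -
    have "continuous_on UNIV (\<lambda>q. d 0 0 (q, 0))" by (rule slice_q[OF dcont]) auto
    then show ?thesis by (rule continuous_on_eq) (auto simp: wE)
  qed
  have outer: "integral {-M..M} (\<lambda>q. integral {-1..0} (Intg q)) + AA * integral {-M..M} (\<lambda>q. w (q, 0))
      = - (G M - G (-M))" if M: "M \<ge> 0" for M
  proof -
    have i1: "((\<lambda>q. w (q, 0)) has_integral integral {-M..M} (\<lambda>q. w (q, 0))) {-M..M}"
      using integrable_continuous_real[OF continuous_on_subset[OF etac]] by (simp add: has_integral_integral)
    have i2: "(G' has_integral G M - G (-M)) {-M..M}"
      by (rule fundamental_theorem_of_calculus) (use M Gd in \<open>auto simp: has_real_derivative_iff_has_vector_derivative[symmetric] intro: has_field_derivative_at_within\<close>)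
    have "((\<lambda>q. - (AA * w (q, 0)) - G' q) has_integral
        - (AA * integral {-M..M} (\<lambda>q. w (q, 0))) - (G M - G (-M))) {-M..M}"
      by (intro has_integral_diff has_integral_neg has_integral_mult_right i1 i2)
    moreover have "(\<lambda>q. integral {-1..0} (Intg q)) = (\<lambda>q. - (AA * w (q, 0)) - G' q)"
      using perq unfolding G'_def by (auto intro!: integral_unique)
    ultimately show ?thesis by (simp add: integral_unique)
  qed
  obtain B where B: "\<forall>x\<in>\<phi> ` {-1..0}. norm x \<le> B"
    using compact_imp_bounded[OF compact_continuous_image[OF pc compact_Icc]] bounded_iff by blast
  define B' where "B' = \<bar>B\<bar> + 1"
  have B'0: "B' > 0" unfolding B'_def by simp
  have pB: "\<bar>\<phi> p\<bar> \<le> B'" if "p \<in> {-1..0}" for p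
  proof -
    have "norm (\<phi> p) \<le> B" using B that by blast
    then show ?thesis unfolding B'_def by simp
  qed
  have Gtail: "\<exists>K. \<forall>q. K \<le> \<bar>q\<bar> \<longrightarrow> \<bar>G q\<bar> \<le> e" if e: "e > 0" for e
  proof -
    define e' where "e' = e * c / B'"
    have e'0: "e' > 0" unfolding e'_def using e c0 B'0 by simp
    obtain K where K: "\<forall>q p. p \<in> {-1..0} \<longrightarrow> K \<le> \<bar>q\<bar> \<longrightarrow> \<bar>d 1 0 (q, p)\<bar> < e'"
      using ddec[rule_format, of 1 0 e'] e'0 by auto
    have "\<bar>G q\<bar> \<le> e" if q: "K \<le> \<bar>q\<bar>" for q
    proof -
      have ci: "continuous_on {-1..0} (\<lambda>t. \<phi> t * bb q t)"
        unfolding bb_def using hpos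
        by (intro continuous_intros pc Hc slice_p dcont) (auto simp: less_imp_neq[symmetric])
      have hi: "((\<lambda>t. \<phi> t * bb q t) has_integral G q) (cbox (-1) 0)"
        unfolding G_def using integrable_continuous_real[OF ci] has_integral_integral by (metis cbox_interval)
      have bnd: "norm (\<phi> t * bb q t) \<le> e" if t: "t \<in> cbox (-1) 0" for t
      proof -
        have tI: "t \<in> {-1..0}" using t by simp
        have "\<bar>d 1 0 (q, t)\<bar> < e'" using K[rule_format, OF tI q] .
        then have h1: "\<bar>d 1 0 (q, t)\<bar> \<le> e'" by (rule less_imp_le)
        have h2: "c \<le> D1 H t + d 0 1 (q, t)" using hpc[OF tI] .
        have "\<bar>bb q t\<bar> = \<bar>d 1 0 (q, t)\<bar> / (D1 H t + d 0 1 (q, t))"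
          unfolding bb_def using hpos[OF tI, of q] by (simp only: abs_divide abs_of_pos)
        also have "\<dots> \<le> e' / c" by (rule frac_le) (use h1 h2 c0 e'0 in auto)
        finally have "\<bar>bb q t\<bar> \<le> e' / c" .
        then have "\<bar>\<phi> t\<bar> * \<bar>bb q t\<bar> \<le> B' * (e' / c)"
          using pB[OF tI] B'0 by (intro mult_mono) auto
        also have "B' * (e' / c) = e" unfolding e'_def using c0 B'0 by (simp add: field_simps)
        finally show ?thesis by (simp add: abs_mult)
      qed
      show ?thesis using has_integral_bound[OF _ hi bnd] e by simp
    qed
    then show ?thesis by blast
  qed
  have lim: "((\<lambda>M. - (G M - G (-M))) \<longlongrightarrow> 0) at_top"
  proof (rule tendstoI)
    fix \<epsilon> :: real assume \<epsilon>: "\<epsilon> > 0"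
    obtain K where K: "\<forall>q. K \<le> \<bar>q\<bar> \<longrightarrow> \<bar>G q\<bar> \<le> \<epsilon> / 3" using Gtail[of "\<epsilon> / 3"] \<epsilon> by auto
    have "\<forall>M\<ge>max K 0. dist (- (G M - G (-M))) 0 < \<epsilon>"
    proof (intro allI impI)
      fix M :: real assume M: "M \<ge> max K 0"
      have "\<bar>G M\<bar> \<le> \<epsilon> / 3" "\<bar>G (-M)\<bar> \<le> \<epsilon> / 3" using K M by auto
      then show "dist (- (G M - G (-M))) 0 < \<epsilon>" using \<epsilon> by (simp add: dist_real_def)
    qed
    then show "\<forall>\<^sub>F M in at_top. dist (- (G M - G (-M))) 0 < \<epsilon>"
      unfolding eventually_at_top_linorder by blast
  qed
  have "((\<lambda>M. integral {-M..M} (\<lambda>q. integral {-1..0} (Intg q)) + AA * integral {-M..M} (\<lambda>q. w (q, 0)))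
      \<longlongrightarrow> 0) at_top"
  proof (rule Lim_transform_eventually[OF lim])
    show "\<forall>\<^sub>F M in at_top. - (G M - G (-M)) =
      integral {-M..M} (\<lambda>q. integral {-1..0} (Intg q)) + AA * integral {-M..M} (\<lambda>q. w (q, 0))"
      unfolding eventually_at_top_linorder by (intro exI[of _ 0] allI impI) (simp add: outer)
  qed
  then show ?thesis unfolding Intg_def AA_def mu_def \<phi>_def h_def .
qed

end
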